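(* Fix $0<\alpha<1$ and $\kappa>0$, and let $\mathbb{W}^*$ be the maximizer $$\mathbb{W}^* = \arg\max_{W'} \sup_{\mathcal{P}_0\in\mathcal{A}} E_{\mathcal{P}_0}^{(s,b),t_0^-}\Big[\sum_{i=0}^M \mathfrak{q}_i + \kappa\Big(W' + \tfrac{1}{\alpha}\min(W_T-W',0)\Big) + \epsilon W_T\Big].$$ Then: (i) A (pre-commitment) control $\mathcal{P}^*_0$ which solves $\text{EW-ES}_{t_0}(\alpha,\kappa)$ is a solution to $\text{EW-LS}_{t_0}(\mathbb{W}^*,\kappa/\alpha)$ (i.e. with the fixed wealth level $\mathbb{W}=\mathbb{W}^*$ and $\hat\kappa=\kappa/\alpha$). (ii) Conversely, an optimal control for $\text{EW-LS}_{t_0}(\mathbb{W}^*,\kappa/\alpha)$ solves $\text{EW-ES}_{t_0}(\alpha,\kappa)$.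
   Context: Decumulation problem on horizon $[0,T]$. Two assets: a stock index and a bond index; $S_t$, $B_t$ denote the real amounts invested, $W_t=S_t+B_t$. Between rebalancing times they evolve without control as jump diffusions $\frac{dS_t}{S_{t^-}}=(\mu^s-\lambda^s\gamma^s)dt+\sigma^s dZ^s+d\big(\sum_{i=1}^{\pi^s_t}(\xi^s_i-1)\big)$, $\frac{dB_t}{B_{t^-}}=(\mu^b-\lambda^b\gamma^b+\mu^b_c\mathbf 1_{\{B_{t^-}<0\}})dt+\sigma^b dZ^b+d\big(\sum_{i=1}^{\pi^b_t}(\xi^b_i-1)\big)$, where $\pi^s,\pi^b$ are Poisson processes with intensities $\lambda^s,\lambda^b$, $\log\xi^{s},\log\xi^b$ are i.i.d. double-exponential jump sizes, $\gamma^{s}=E[\xi^s-1]$, $\gamma^b=E[\xi^b-1]$, $dZ^s dZ^b=\rho_{sb}dt$, and the jump processes are independent of each other and of the Brownian motions. Rebalancing times $t_0=0<t_1<\dots<t_M=T$, equally spaced. At each $t_i$ the investor withdraws $\mathfrak{q}_i$, so $W(t_i^+)=W(t_i^-)-\mathfrak{q}_i$, then sets $S(t_i^+)=\mathfrak{p}_iW(t_i^+)$, $B(t_i^+)=(1-\mathfrak{p}_i)W(t_i^+)$. Controls $(\mathfrak{q}_i,\mathfrak{p}_i)$ are feedback functions of the state $(S(t_i^-),B(t_i^-))$ and $t_i$. Admissibility: for $i<M$, $\mathfrak{q}_i\in[\mathfrak{q}_{\min},\mathfrak{q}_{\max}]$ if $W_i^-\ge\mathfrak{q}_{\max}$ and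 $\mathfrak{q}_i\in[\mathfrak{q}_{\min},\max(\mathfrak{q}_{\min},W_i^-)]$ if $W_i^-<\mathfrak{q}_{\max}$; $\mathfrak{q}_M=0$; $\mathfrak{p}_i\in[0,1]$ if $W_i^+>0$ and $i<M$, $\mathfrak{p}_i=0$ if $W_i^+\le 0$ or $i=M$. $\mathcal{A}$ is the set of admissible controls $\mathcal{P}_0=\{(\mathfrak{q}_i,\mathfrak{p}_i)\}_{i=0}^M$. $E_{\mathcal{P}_0}^{(s,b),t_0^-}$ is expectation under control $\mathcal{P}_0$ given initial state $(S(t_0^-),B(t_0^-))=(s,b)$; $W_T$ is terminal wealth; $\epsilon$ is a fixed real stabilization constant. $\text{EW-LS}_{t_0}(\mathbb{W},\hat\kappa)$, for $\mathbb{W}\in\mathbb{R}$, $\hat\kappa>0$: $\sup_{\mathcal{P}_0\in\mathcal{A}} E_{\mathcal{P}_0}^{(s,b),t_0^-}\big[\sum_{i=0}^M\mathfrak{q}_i+\hat\kappa\min(W_T-\mathbb{W},0)+\epsilon W_T\big]$. $\text{EW-ES}_{t_0}(\alpha,\kappa)$, for $0<\alpha<1$, $\kappa>0$: $\sup_{\mathcal{P}_0\in\mathcal{A}} E_{\mathcal{P}_0}^{(s,b),t_0^-}\big[\sum_{i=0}^M\mathfrak{q}_i+\kappa\sup_{W'}\big(W'+\tfrac1\alpha\min(W_T-W',0)\big)+\epsilon W_T\big]$, which by interchanging suprema equals $\sup_{W'}\sup_{\mathcal{P}_0\in\mathcal{A}}E[\cdots]$ with the inner $\sup_{W'}$ removed.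 The maximizer $\mathbb{W}^*$ above is assumed to exist. *)

theory Defs
  imports "HOL-Probability.Probability"
begin

(* Abstract rendering of the decumulation model.
   'c : admissible controls P_0 (the set A :: 'c set)
   M  : underlying probability space (scenarios 'w), under the given initial state (s,b) at t_0^-
   q c i w : withdrawal q_i at rebalancing time t_i under control c in scenario w
   WT c w  : terminal wealth W_T under control c in scenario w
   Mn      : index of the last rebalancing time t_M = T *)

definition EW_LS_obj ::
  "'w measure \<Rightarrow> ('c \<Rightarrow> nat \<Rightarrow> 'w \<Rightarrow> real) \<Rightarrow> nat \<Rightarrow> ('c \<Rightarrow> 'w \<Rightarrow> real)
   \<Rightarrow> real \<Rightarrow> real \<Rightarrow> real \<Rightarrow> 'c \<Rightarrow> real" where
  "EW_LS_obj M q Mn WT eps WW kh c =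
     (\<integral>w. (\<Sum>i\<le>Mn. q c i w) + kh * min (WT c w - WW) 0 + eps * WT c w \<partial>M)"

definition EW_ES_J ::
  "'w measure \<Rightarrow> ('c \<Rightarrow> nat \<Rightarrow> 'w \<Rightarrow> real) \<Rightarrow> nat \<Rightarrow> ('c \<Rightarrow> 'w \<Rightarrow> real)
   \<Rightarrow> real \<Rightarrow> real \<Rightarrow> real \<Rightarrow> 'c \<Rightarrow> real \<Rightarrow> real" where
  "EW_ES_J M q Mn WT eps alpha kappa c W' =
     (\<integral>w. (\<Sum>i\<le>Mn. q c i w) + kappa * (W' + (1 / alpha) * min (WT c w - W') 0)
          + eps * WT c w \<partial>M)"

(* EW-ES objective of a control: sup over W' of the expectation (interchanged form) *)
definition EW_ES_obj ::
  "'w measure \<Rightarrow> ('c \<Rightarrow> nat \<Rightarrow> 'w \<Rightarrow> real) \<Rightarrow> nat \<Rightarrow> ('c \<Rightarrow> 'w \<Rightarrow> real)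
   \<Rightarrow> real \<Rightarrow> real \<Rightarrow> real \<Rightarrow> 'c \<Rightarrow> ereal" where
  "EW_ES_obj M q Mn WT eps alpha kappa c =
     (SUP W'. ereal (EW_ES_J M q Mn WT eps alpha kappa c W'))"

definition EW_ES_value_at ::
  "'c set \<Rightarrow> 'w measure \<Rightarrow> ('c \<Rightarrow> nat \<Rightarrow> 'w \<Rightarrow> real) \<Rightarrow> nat \<Rightarrow> ('c \<Rightarrow> 'w \<Rightarrow> real)
   \<Rightarrow> real \<Rightarrow> real \<Rightarrow> real \<Rightarrow> real \<Rightarrow> ereal" where
  "EW_ES_value_at A M q Mn WT eps alpha kappa W' =
     (SUP c\<in>A. ereal (EW_ES_J M q Mn WT eps alpha kappa c W'))"

definition solves_EW_LS ::
  "'c set \<Rightarrow> 'w measure \<Rightarrow> ('c \<Rightarrow> nat \<Rightarrow> 'w \<Rightarrow> real) \<Rightarrow> nat \<Rightarrow> ('c \<Rightarrow> 'w \<Rightarrow> real)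
   \<Rightarrow> real \<Rightarrow> real \<Rightarrow> real \<Rightarrow> 'c \<Rightarrow> bool" where
  "solves_EW_LS A M q Mn WT eps WW kh c \<longleftrightarrow>
     c \<in> A \<and> (\<forall>c'\<in>A. EW_LS_obj M q Mn WT eps WW kh c' \<le> EW_LS_obj M q Mn WT eps WW kh c)"

definition solves_EW_ES ::
  "'c set \<Rightarrow> 'w measure \<Rightarrow> ('c \<Rightarrow> nat \<Rightarrow> 'w \<Rightarrow> real) \<Rightarrow> nat \<Rightarrow> ('c \<Rightarrow> 'w \<Rightarrow> real)
   \<Rightarrow> real \<Rightarrow> real \<Rightarrow> real \<Rightarrow> 'c \<Rightarrow> bool" where
  "solves_EW_ES A M q Mn WT eps alpha kappa c \<longleftrightarrow>
     c \<in> A \<and> (\<forall>c'\<in>A. EW_ES_obj M q Mn WT eps alpha kappa c' \<le> EW_ES_obj M q Mn WT eps alpha kappa c)"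

end

theory Submission imports Defs begin

lemma m_props:
  fixes X :: "'w \<Rightarrow> real"
  assumes P: "prob_space M" and iX: "integrable M X"
  shows "integrable M (\<lambda>x. min (X x - w) 0)"
    and "(\<integral>x. min (X x - w) 0 \<partial>M) \<le> 0"
    and "(\<integral>x. min (X x - w) 0 \<partial>M) \<le> (\<integral>x. X x \<partial>M) - w"
    and "\<bar>(\<integral>x. min (X x - w) 0 \<partial>M) - (\<integral>x. min (X x - w') 0 \<partial>M)\<bar> \<le> \<bar>w - w'\<bar>"
proof -
  interpret prob_space M by (rule P)
  have i: "\<And>w. integrable M (\<lambda>x. min (X x - w) 0)" using iX by auto
  then show "integrable M (\<lambda>x. min (X x - w) 0)" .
  have "(\<integral>x. min (X x - w) 0 \<partial>M) \<le> (\<integral>x. 0 \<partial>M)"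
    by (rule integral_mono) (use i in simp_all)
  then show "(\<integral>x. min (X x - w) 0 \<partial>M) \<le> 0" by simp
  have "(\<integral>x. min (X x - w) 0 \<partial>M) \<le> (\<integral>x. X x - w \<partial>M)"
    by (rule integral_mono) (use i iX in simp_all)
  also have "\<dots> = (\<integral>x. X x \<partial>M) - w" using iX by (simp add: prob_space)
  finally show "(\<integral>x. min (X x - w) 0 \<partial>M) \<le> (\<integral>x. X x \<partial>M) - w" .
  have "\<bar>(\<integral>x. min (X x - w) 0 \<partial>M) - (\<integral>x. min (X x - w') 0 \<partial>M)\<bar>
      = \<bar>(\<integral>x. min (X x - w) 0 - min (X x - w') 0 \<partial>M)\<bar>"
    using i by (simp add: integral_diff)
  also have "\<dots> \<le> (\<integral>x. \<bar>min (X x - w) 0 - min (X x - w') 0\<bar> \<partial>M)"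
    by (rule integral_abs_bound)
  also have "\<dots> \<le> (\<integral>x. \<bar>w - w'\<bar> \<partial>M)"
  proof (rule integral_mono)
    show "integrable M (\<lambda>x. \<bar>min (X x - w) 0 - min (X x - w') 0\<bar>)"
      by (rule integrable_abs, rule Bochner_Integration.integrable_diff[OF i i])
    show "integrable M (\<lambda>x. \<bar>w - w'\<bar>)" by simp
    show "\<And>x. x \<in> space M \<Longrightarrow> \<bar>min (X x - w) 0 - min (X x - w') 0\<bar> \<le> \<bar>w - w'\<bar>"
      by (simp add: min_def abs_if)
  qed
  also have "\<dots> = \<bar>w - w'\<bar>" by (simp add: prob_space)
  finally show "\<bar>(\<integral>x. min (X x - w) 0 \<partial>M) - (\<integral>x. min (X x - w') 0 \<partial>M)\<bar> \<le> \<bar>w - w'\<bar>" .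
qed

lemma attain:
  fixes m :: "real \<Rightarrow> real"
  assumes k: "0 < k" and a: "0 < a" "a < 1"
    and m1: "\<And>w. m w \<le> 0" and m2: "\<And>w. m w \<le> E - w"
    and m3: "\<And>w w'. \<bar>m w - m w'\<bar> \<le> \<bar>w - w'\<bar>"
  shows "\<exists>w0. \<forall>w. C + k * w + (k / a) * m w \<le> C + k * w0 + (k / a) * m w0"
proof -
  define h where "h w = C + k * w + (k / a) * m w" for w
  define r where "r = h 0"
  define lo where "lo = min 0 ((r - C) / k - 1)"
  define d where "d = k * (1 / a - 1)"
  have d: "d > 0" using k a by (simp add: d_def field_simps)
  define hi where "hi = max 0 ((C + (k / a) * E - r) / d + 1)"
  have ka: "k / a > 0" using k a by simp
  have cont: "continuous_on {lo..hi} h"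
    unfolding continuous_on_iff
  proof (intro ballI allI impI)
    fix x e :: real assume "0 < e"
    show "\<exists>d>0. \<forall>x'\<in>{lo..hi}. dist x' x < d \<longrightarrow> dist (h x') (h x) < e"
    proof (intro exI[of _ "e / (k + k / a)"] conjI ballI impI)
      show "0 < e / (k + k / a)" using \<open>0 < e\<close> k ka by simp
      fix x' assume "dist x' x < e / (k + k / a)"
      hence lt: "\<bar>x' - x\<bar> * (k + k / a) < e" using k ka by (simp add: dist_real_def field_simps)
      have "\<bar>h x' - h x\<bar> \<le> k * \<bar>x' - x\<bar> + (k / a) * \<bar>m x' - m x\<bar>"
      proof -
        have "h x' - h x = k * (x' - x) + (k / a) * (m x' - m x)"
          unfolding h_def by (simp add: algebra_simps)
        also have "\<bar>\<dots>\<bar> \<le> \<bar>k * (x' - x)\<bar> + \<bar>(k / a) * (m x' - m x)\<bar>"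
          by (rule abs_triangle_ineq)
        also have "\<dots> = k * \<bar>x' - x\<bar> + (k / a) * \<bar>m x' - m x\<bar>"
          using k ka a by (simp add: abs_mult)
        finally show ?thesis .
      qed
      also have "\<dots> \<le> k * \<bar>x' - x\<bar> + (k / a) * \<bar>x' - x\<bar>"
        using mult_left_mono[OF m3[of x' x], of "k / a"] ka by simp
      finally show "dist (h x') (h x) < e" using lt by (simp add: dist_real_def algebra_simps)
    qed
  qed
  have "lo \<le> hi" by (simp add: lo_def hi_def)
  obtain w0 where w0: "w0 \<in> {lo..hi}" "\<And>y. y \<in> {lo..hi} \<Longrightarrow> h y \<le> h w0"
    using continuous_attains_sup[OF compact_Icc _ cont] \<open>lo \<le> hi\<close> by auto
  have "0 \<in> {lo..hi}" by (simp add: lo_def hi_def)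
  hence r0: "r \<le> h w0" using w0 r_def by auto
  have "h w \<le> h w0" for w
  proof (cases "w \<in> {lo..hi}")
    case True then show ?thesis using w0 by auto
  next
    case False
    then consider "w < lo" | "w > hi" by force
    then show ?thesis
    proof cases
      case 1
      hence "w < (r - C) / k - 1" unfolding lo_def by simp
      hence "k * w < r - C" using k by (simp add: field_simps)
      moreover have "(k / a) * m w \<le> 0" using mult_nonneg_nonpos[OF less_imp_le[OF ka] m1[of w]] by simp
      ultimately show ?thesis using r0 unfolding h_def by linarith
    next
      case 2
      hence "w > (C + (k / a) * E - r) / d" unfolding hi_def by simp
      hence "d * w > C + (k / a) * E - r" using d by (simp add: field_simps)
      moreover have "(k / a) * m w \<le> (k / a) * (E - w)" using mult_left_mono[OF m2[of w] less_imp_le[OF ka]] by simp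
      moreover have "d * w = (k / a) * w - k * w" unfolding d_def by (simp add: algebra_simps)
      moreover have "(k / a) * (E - w) = (k / a) * E - (k / a) * w" by (rule right_diff_distrib)
      ultimately have "h w < r" unfolding h_def by linarith
      then show ?thesis using r0 by simp
    qed
  qed
  then show ?thesis unfolding h_def by blast
qed


lemma J_LS:
  assumes P: "prob_space M"
    and iq: "\<And>i. i \<le> Mn \<Longrightarrow> integrable M (q c i)"
    and iX: "integrable M (WT c)"
  shows "EW_ES_J M q Mn WT eps alpha kappa c W = EW_LS_obj M q Mn WT eps W (kappa / alpha) c + kappa * W"
    and "EW_LS_obj M q Mn WT eps W (kappa / alpha) c =
           ((\<integral>x. (\<Sum>i\<le>Mn. q c i x) \<partial>M) + eps * (\<integral>x. WT c x \<partial>M))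
           + (kappa / alpha) * (\<integral>x. min (WT c x - W) 0 \<partial>M)"
proof -
  interpret prob_space M by (rule P)
  have iS: "integrable M (\<lambda>x. \<Sum>i\<le>Mn. q c i x)"
    by (rule Bochner_Integration.integrable_sum) (use iq in auto)
  have im: "integrable M (\<lambda>x. min (WT c x - W) 0)" by (rule m_props(1)[OF P iX])
  have iL: "integrable M (\<lambda>x. (\<Sum>i\<le>Mn. q c i x) + kappa / alpha * min (WT c x - W) 0 + eps * WT c x)"
    using iS im iX by auto
  have eq: "(\<lambda>x. (\<Sum>i\<le>Mn. q c i x) + kappa * (W + (1 / alpha) * min (WT c x - W) 0) + eps * WT c x)
     = (\<lambda>x. ((\<Sum>i\<le>Mn. q c i x) + kappa / alpha * min (WT c x - W) 0 + eps * WT c x) + kappa * W)"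
    by (rule ext) (simp add: algebra_simps)
  show "EW_ES_J M q Mn WT eps alpha kappa c W = EW_LS_obj M q Mn WT eps W (kappa / alpha) c + kappa * W"
    unfolding EW_ES_J_def EW_LS_obj_def eq
    using iL by (simp add: Bochner_Integration.integral_add prob_space)
  show "EW_LS_obj M q Mn WT eps W (kappa / alpha) c =
           ((\<integral>x. (\<Sum>i\<le>Mn. q c i x) \<partial>M) + eps * (\<integral>x. WT c x \<partial>M))
           + (kappa / alpha) * (\<integral>x. min (WT c x - W) 0 \<partial>M)"
    unfolding EW_LS_obj_def using iS im iX
    by (simp add: Bochner_Integration.integral_add algebra_simps)
qed

theorem proposition1:
  fixes A :: "'c set" and M :: "'w measure"
    and q :: "'c \<Rightarrow> nat \<Rightarrow> 'w \<Rightarrow> real" and WT :: "'c \<Rightarrow> 'w \<Rightarrow> real"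
    and Mn :: nat and eps alpha kappa Wstar :: real
  assumes "prob_space M"
    and "\<And>c i. c \<in> A \<Longrightarrow> i \<le> Mn \<Longrightarrow> integrable M (q c i)"
    and "\<And>c. c \<in> A \<Longrightarrow> integrable M (WT c)"
    and "0 < alpha" "alpha < 1" "0 < kappa"
    and Wstar_max: "\<And>W'. EW_ES_value_at A M q Mn WT eps alpha kappa W'
                        \<le> EW_ES_value_at A M q Mn WT eps alpha kappa Wstar"
    and Wstar_unique: "\<And>W'. EW_ES_value_at A M q Mn WT eps alpha kappa W'
                        = EW_ES_value_at A M q Mn WT eps alpha kappa Wstar \<Longrightarrow> W' = Wstar"
  shows "(\<forall>P. solves_EW_ES A M q Mn WT eps alpha kappa P
              \<longrightarrow> solves_EW_LS A M q Mn WT eps Wstar (kappa / alpha) P)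
       \<and> (\<forall>P. solves_EW_LS A M q Mn WT eps Wstar (kappa / alpha) P
              \<longrightarrow> solves_EW_ES A M q Mn WT eps alpha kappa P)"
proof -
  note P = assms(1)
  define J where "J c W = EW_ES_J M q Mn WT eps alpha kappa c W" for c W
  define LS where "LS c = EW_LS_obj M q Mn WT eps Wstar (kappa / alpha) c" for c
  define V where "V W = EW_ES_value_at A M q Mn WT eps alpha kappa W" for W
  define ES where "ES c = EW_ES_obj M q Mn WT eps alpha kappa c" for c
  have Vdef: "V W = (SUP c\<in>A. ereal (J c W))" for W
    unfolding V_def J_def EW_ES_value_at_def ..
  have ESdef: "ES c = (SUP W. ereal (J c W))" for c
    unfolding ES_def J_def EW_ES_obj_def ..
  have JLS: "J c Wstar = LS c + kappa * Wstar" if "c \<in> A" for c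
    unfolding J_def LS_def by (rule J_LS(1)[OF P]) (use assms(2,3) that in auto)
  have JV: "ereal (J c W) \<le> V W" if "c \<in> A" for c W
    unfolding Vdef using that by (rule SUP_upper)
  have JES: "ereal (J c W) \<le> ES c" for c W
    unfolding ESdef by (rule SUP_upper) simp
  have attain: "\<exists>w0. \<forall>w. J c w \<le> J c w0" if "c \<in> A" for c
  proof -
    have iX: "integrable M (WT c)" using assms(3) that by auto
    define C where "C = (\<integral>x. (\<Sum>i\<le>Mn. q c i x) \<partial>M) + eps * (\<integral>x. WT c x \<partial>M)"
    define m where "m W = (\<integral>x. min (WT c x - W) 0 \<partial>M)" for W
    have Jeq: "J c W = C + kappa * W + (kappa / alpha) * m W" for W
      unfolding J_def C_def m_def
      using J_LS[OF P, where Mn=Mn and q=q and c=c and WT=WT and eps=eps and alpha=alpha and kappa=kappa and W=W] assms(2,3) that by auto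
    obtain w0 where "\<forall>w. C + kappa * w + (kappa / alpha) * m w \<le> C + kappa * w0 + (kappa / alpha) * m w0"
      using attain[of kappa alpha m "\<integral>x. WT c x \<partial>M" C] assms(4-6)
        m_props(2-4)[OF P iX] unfolding m_def by blast
    then show ?thesis unfolding Jeq by blast
  qed
  show ?thesis
  proof (intro conjI allI impI)
    fix Q assume "solves_EW_ES A M q Mn WT eps alpha kappa Q"
    hence QA: "Q \<in> A" and Qopt: "\<And>c'. c' \<in> A \<Longrightarrow> ES c' \<le> ES Q"
      unfolding solves_EW_ES_def ES_def by auto
    obtain w0 where w0: "\<And>w. J Q w \<le> J Q w0" using attain[OF QA] by blast
    have ESQ: "ES Q \<le> ereal (J Q w0)" unfolding ESdef
      by (rule SUP_least) (use w0 in simp)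
    have "V Wstar \<le> ES Q" unfolding Vdef
      by (rule SUP_least) (use JES Qopt order_trans in blast)
    also have "\<dots> \<le> ereal (J Q w0)" by (rule ESQ)
    also have "\<dots> \<le> V w0" by (rule JV[OF QA])
    finally have "V Wstar \<le> V w0" .
    moreover have "V w0 \<le> V Wstar" unfolding V_def by (rule Wstar_max)
    ultimately have "V w0 = V Wstar" by simp
    hence "w0 = Wstar" unfolding V_def by (rule Wstar_unique)
    have key: "V Wstar \<le> ereal (J Q Wstar)"
      using \<open>V Wstar \<le> ES Q\<close> ESQ \<open>w0 = Wstar\<close> by simp
    show "solves_EW_LS A M q Mn WT eps Wstar (kappa / alpha) Q"
      unfolding solves_EW_LS_def
    proof (intro conjI ballI QA)
      fix c' assume c': "c' \<in> A"
      have "ereal (J c' Wstar) \<le> ereal (J Q Wstar)" using JV[OF c'] key order_trans by blast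
      hence "J c' Wstar \<le> J Q Wstar" by simp
      thus "EW_LS_obj M q Mn WT eps Wstar (kappa / alpha) c' \<le> EW_LS_obj M q Mn WT eps Wstar (kappa / alpha) Q"
        using JLS[OF c'] JLS[OF QA] unfolding LS_def by simp
    qed
  next
    fix Q assume "solves_EW_LS A M q Mn WT eps Wstar (kappa / alpha) Q"
    hence QA: "Q \<in> A" and Qopt: "\<And>c'. c' \<in> A \<Longrightarrow> LS c' \<le> LS Q"
      unfolding solves_EW_LS_def LS_def by auto
    have "V Wstar \<le> ereal (J Q Wstar)" unfolding Vdef
    proof (rule SUP_least)
      fix c assume c: "c \<in> A"
      show "ereal (J c Wstar) \<le> ereal (J Q Wstar)"
        using JLS[OF c] JLS[OF QA] Qopt[OF c] by simp
    qed
    also have "\<dots> \<le> ES Q" by (rule JES)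
    finally have VQ: "V Wstar \<le> ES Q" .
    show "solves_EW_ES A M q Mn WT eps alpha kappa Q"
      unfolding solves_EW_ES_def
    proof (intro conjI ballI QA)
      fix c' assume c': "c' \<in> A"
      have "ES c' \<le> V Wstar" unfolding ESdef
      proof (rule SUP_least)
        fix W
        have "ereal (J c' W) \<le> V W" by (rule JV[OF c'])
        also have "\<dots> \<le> V Wstar" unfolding V_def by (rule Wstar_max)
        finally show "ereal (J c' W) \<le> V Wstar" .
      qed
      thus "EW_ES_obj M q Mn WT eps alpha kappa c' \<le> EW_ES_obj M q Mn WT eps alpha kappa Q"
        using VQ unfolding ES_def by simp
    qed
  qed
qed

end
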